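(* For $1\le p<\infty$ and $N\ge1$, let $F_p:(\mathbb{R}^N\setminus\{0\})\times\mathbb{S}(N)\to\mathbb{R}$, $$F_p(\nu,X)=-|\nu|^{p-2}\Big[\operatorname{tr}X+(p-2)\Big\langle X\frac{\nu}{|\nu|},\frac{\nu}{|\nu|}\Big\rangle\Big],$$ regarded as a function on $\mathcal{D}=\Omega\times\mathbb{R}\times(\mathbb{R}^N\setminus\{0\})\times\mathbb{S}(N)$ independent of the $x$ and $u$ variables. Then $F_p$ belongs to Class M if and only if $p\in(1,\infty)$.
   Context: $\mathbb{S}(N)$ is the space of real symmetric $N\times N$ matrices with the Löwner order; $\lambda_1(X)\le\dots\le\lambda_N(X)$ are the eigenvalues of $X$. Class M (for $F:\mathcal{D}\to\mathbb{R}$, $\mathcal{D}\subseteq\Omega\times\mathbb{R}\times\mathbb{R}^N\times\mathbb{S}(N)$): $F$ is continuous in its matrix entry, and for every $\omega$ and sets $\mathcal{S}_1,\mathcal{S}_2\subseteq\mathbb{S}(N)$ with $\{\omega\}\times\mathcal{S}_i\subseteq\mathcal{D}$, there exist $g_i:\mathbb{R}\times\mathcal{S}_i\to\mathbb{R}$ (possibly depending on $\omega$) such that: (1) for each fixed $M_0\in\mathcal{S}_i$, $t\mapsto g_i(t,M_0)$ is an increasing bijection $\mathbb{R}\to\mathbb{R}$, with inverse $s\mapsto g_i(-,M_0)^{-1}(s)$; (2) $M\mapsto g_i(-,M)^{-1}(0)$ is continuous on $\mathcal{S}_i$; (3) for $M\in\mathcal{S}_1$, if $(\omega,X)\in\mathcal{D}$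 and $X\le M$ then $-F(\omega,X)\le g_1(\lambda_1(X),M)$; (4) for $M\in\mathcal{S}_2$, if $(\omega,Y)\in\mathcal{D}$ and $-Y\le M$ then $-F(\omega,Y)\ge g_2(\lambda_N(Y),M)$. *)

theory Defs
  imports "HOL-Analysis.Analysis"
begin

type_synonym 'n rmat = "real^'n^'n"

definition sym_mat :: "'n::finite rmat \<Rightarrow> bool" where
  "sym_mat X \<longleftrightarrow> transpose X = X"

definition loewner_le :: "'n::finite rmat \<Rightarrow> 'n rmat \<Rightarrow> bool" where
  "loewner_le X M \<longleftrightarrow> (\<forall>v. v \<bullet> ((M - X) *v v) \<ge> 0)"

definition eigenvalues :: "'n::finite rmat \<Rightarrow> real set" where
  "eigenvalues X = {l. \<exists>v. v \<noteq> 0 \<and> X *v v = l *s v}"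

definition eig_min :: "'n::finite rmat \<Rightarrow> real" where
  "eig_min X = Min (eigenvalues X)"

definition eig_max :: "'n::finite rmat \<Rightarrow> real" where
  "eig_max X = Max (eigenvalues X)"

text \<open>Class M for F defined on a domain D of pairs (omega, X), omega the
  lower-order variables (x,u,nu).\<close>
definition classM :: "('w \<times> 'n::finite rmat) set \<Rightarrow> ('w \<Rightarrow> 'n rmat \<Rightarrow> real) \<Rightarrow> bool" where
  "classM D F \<longleftrightarrow>
     (\<forall>\<omega>. continuous_on {X. (\<omega>, X) \<in> D} (F \<omega>)) \<and>
     (\<forall>\<omega> S1. {\<omega>} \<times> S1 \<subseteq> D \<longrightarrow>
        (\<exists>g1 :: real \<Rightarrow> 'n rmat \<Rightarrow> real.
           (\<forall>M\<in>S1. bij (\<lambda>t. g1 t M) \<and> mono (\<lambda>t. g1 t M)) \<and>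
           continuous_on S1 (\<lambda>M. inv (\<lambda>t. g1 t M) 0) \<and>
           (\<forall>M\<in>S1. \<forall>X. (\<omega>, X) \<in> D \<and> loewner_le X M \<longrightarrow> - F \<omega> X \<le> g1 (eig_min X) M))) \<and>
     (\<forall>\<omega> S2. {\<omega>} \<times> S2 \<subseteq> D \<longrightarrow>
        (\<exists>g2 :: real \<Rightarrow> 'n rmat \<Rightarrow> real.
           (\<forall>M\<in>S2. bij (\<lambda>t. g2 t M) \<and> mono (\<lambda>t. g2 t M)) \<and>
           continuous_on S2 (\<lambda>M. inv (\<lambda>t. g2 t M) 0) \<and>
           (\<forall>M\<in>S2. \<forall>Y. (\<omega>, Y) \<in> D \<and> loewner_le (- Y) M \<longrightarrow> - F \<omega> Y \<ge> g2 (eig_max Y) M)))"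

definition F_p :: "real \<Rightarrow> real^'n::finite \<Rightarrow> 'n rmat \<Rightarrow> real" where
  "F_p p \<nu> X = - (norm \<nu> powr (p - 2)) *
     (trace X + (p - 2) * ((X *v (\<nu> /\<^sub>R norm \<nu>)) \<bullet> (\<nu> /\<^sub>R norm \<nu>)))"

definition D_p :: "(real^'n::finite) set \<Rightarrow> (((real^'n) \<times> real \<times> (real^'n)) \<times> 'n rmat) set" where
  "D_p \<Omega> = {((x, u, \<nu>), X). x \<in> \<Omega> \<and> \<nu> \<noteq> 0 \<and> sym_mat X}"

end

theory Submission
  imports Defs
begin

definition qf :: "'n::finite rmat \<Rightarrow> real^'n \<Rightarrow> real" where
  "qf X w = (X *v w) \<bullet> w"

lemma sym_inner:
  assumes "sym_mat X"
  shows "x \<bullet> (X *v y) = (X *v x) \<bullet> y"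
proof -
  have "x \<bullet> (X *v y) = (x v* X) \<bullet> y" by (simp add: dot_lmul_matrix)
  also have "x v* X = x v* transpose X" using assms by (simp add: sym_mat_def)
  also have "\<dots> = X *v x" by simp
  finally show ?thesis .
qed

lemma qf_add:
  assumes "sym_mat X"
  shows "qf X (a + b) = qf X a + 2 * ((X *v a) \<bullet> b) + qf X b"
proof -
  have "(X *v b) \<bullet> a = (X *v a) \<bullet> b"
    using sym_inner[OF assms, of b a] by (simp add: inner_commute)
  then show ?thesis
    by (simp add: qf_def matrix_vector_right_distrib inner_add_left inner_add_right inner_commute)
qed

lemma qf_scale: "qf X (c *\<^sub>R w) = c^2 * qf X w"
  by (simp add: qf_def matrix_vector_mult_scaleR power2_eq_square)

lemma min_rayleigh:
  assumes "sym_mat X"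
  obtains u m where "norm u = 1" "X *v u = m *s u" "\<And>w. m * (w \<bullet> w) \<le> qf X w"
proof -
  have cont: "continuous_on UNIV (qf X)"
    unfolding qf_def by (intro continuous_intros linear_continuous_on linear_conv_bounded_linear[THEN iffD1] matrix_vector_mul_linear)
  have "compact (sphere (0::real^'n) 1)" by simp
  moreover have "sphere (0::real^'n) 1 \<noteq> {}"
    by (simp add: sphere_def) (metis norm_axis_1)
  ultimately obtain u where u: "u \<in> sphere 0 1" and umin: "\<And>w. w \<in> sphere 0 1 \<Longrightarrow> qf X u \<le> qf X w"
    using continuous_attains_inf[of "sphere 0 1" "qf X"] continuous_on_subset[OF cont] by blast
  define m where "m = qf X u"
  have nu: "norm u = 1" using u by simp
  have ge: "m * (w \<bullet> w) \<le> qf X w" for w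
  proof (cases "w = 0")
    case True then show ?thesis by (simp add: qf_def)
  next
    case False
    define w' where "w' = (1 / norm w) *\<^sub>R w"
    have "w' \<in> sphere 0 1" using False by (simp add: w'_def)
    then have "m \<le> qf X w'" using umin m_def by simp
    also have "qf X w' = qf X w / (norm w)^2" by (simp add: w'_def qf_scale power_divide)
    finally have "m * (norm w)^2 \<le> qf X w" using False by (simp add: pos_le_divide_eq)
    then show ?thesis by (simp add: power2_norm_eq_inner)
  qed
  define z where "z = X *v u - m *s u"
  have uu: "u \<bullet> u = 1" using nu by (simp add: dot_square_norm)
  have Qz: "z \<bullet> z = 0"
  proof (rule ccontr)
    assume nz: "z \<bullet> z \<noteq> 0"
    then have zpos: "z \<bullet> z > 0" by (simp add: order_less_le)
    define Q where "Q = qf X z - m * (z \<bullet> z)"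
    have Q0: "Q \<ge> 0" using ge[of z] by (simp add: Q_def)
    define s where "s = - (z \<bullet> z) / (Q + 1)"
    have "m * ((u + s *\<^sub>R z) \<bullet> (u + s *\<^sub>R z)) \<le> qf X (u + s *\<^sub>R z)" by (rule ge)
    moreover have "qf X (u + s *\<^sub>R z) = m + 2 * s * (z \<bullet> z + m * (u \<bullet> z)) + s^2 * qf X z"
    proof -
      have "(X *v u) \<bullet> z = z \<bullet> z + m * (u \<bullet> z)"
        by (simp add: z_def inner_diff_left inner_commute scalar_mult_eq_scaleR)
      moreover have "qf X u = m" by (simp add: m_def)
      ultimately show ?thesis
        using qf_add[OF assms, of u "s *\<^sub>R z"] by (simp add: qf_scale)
    qed
    moreover have "(u + s *\<^sub>R z) \<bullet> (u + s *\<^sub>R z) = 1 + 2 * s * (u \<bullet> z) + s^2 * (z \<bullet> z)"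
    proof -
      have uu: "u \<bullet> u = 1" using nu by (simp add: dot_square_norm)
      show ?thesis by (simp add: inner_add_left inner_add_right inner_commute uu power2_eq_square algebra_simps)
    qed
    ultimately have "0 \<le> 2 * s * (z \<bullet> z) + s^2 * Q"
      by (simp add: Q_def algebra_simps power2_eq_square uu inner_commute)
    moreover have "2 * s * (z \<bullet> z) + s^2 * Q < 0"
    proof -
      have s: "s < 0" using zpos Q0 by (simp add: s_def)
      have "s^2 * Q = s * (s * Q)" by (simp add: power2_eq_square)
      have "- s * Q \<le> z \<bullet> z" using zpos Q0 by (simp add: s_def field_simps)
      then have "s * (- s * Q) \<ge> s * (z \<bullet> z)" using s by (intro mult_left_mono_neg) auto
      moreover have "s * (z \<bullet> z) < 0" using s zpos by (simp add: mult_neg_pos)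
      ultimately show ?thesis by (simp add: power2_eq_square algebra_simps)
    qed
    ultimately show False by simp
  qed
  then have "X *v u = m *s u" by (simp add: z_def)
  with nu ge show ?thesis using that by blast
qed

lemma eig_orth:
  assumes "sym_mat X" "X *v v = l *s v" "X *v w = l' *s w" "l \<noteq> l'"
  shows "v \<bullet> w = 0"
proof -
  have "l * (v \<bullet> w) = (X *v v) \<bullet> w" using assms(2) by (simp add: scalar_mult_eq_scaleR)
  also have "\<dots> = v \<bullet> (X *v w)" using sym_inner[OF assms(1)] by simp
  also have "\<dots> = l' * (v \<bullet> w)" using assms(3) by (simp add: scalar_mult_eq_scaleR)
  finally show ?thesis using assms(4) by simp
qed

lemma finite_eigenvalues:
  assumes "sym_mat X"
  shows "finite (eigenvalues X)"
proof -
  define E where "E = eigenvalues X"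
  define f where "f l = (SOME v. v \<noteq> 0 \<and> X *v v = l *s v)" for l
  have f: "f l \<noteq> 0 \<and> X *v f l = l *s f l" if "l \<in> E" for l
  proof -
    have "\<exists>v. v \<noteq> 0 \<and> X *v v = l *s v" using that unfolding E_def eigenvalues_def by simp
    then show ?thesis unfolding f_def by (rule someI_ex)
  qed
  have inj: "inj_on f E"
  proof (rule inj_onI)
    fix l l' assume lE: "l \<in> E" and l'E: "l' \<in> E" and eq: "f l = f l'"
    have A1: "f l \<noteq> 0" "X *v f l = l *s f l" using f[OF lE] by auto
    have A2: "X *v f l = l' *s f l" using f[OF l'E] unfolding eq[symmetric] by blast
    have "l *s f l = l' *s f l" using A1(2) A2 by metis
    then have "l *\<^sub>R f l = l' *\<^sub>R f l" by (simp only: scalar_mult_eq_scaleR)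
    then show "l = l'" using A1(1) by simp
  qed
  have "pairwise orthogonal (f ` E)"
    unfolding pairwise_def orthogonal_def
  proof (intro ballI impI)
    fix x y assume x: "x \<in> f ` E" and y: "y \<in> f ` E" and xy: "x \<noteq> y"
    obtain l where l: "l \<in> E" "x = f l" using x by blast
    obtain l' where l': "l' \<in> E" "y = f l'" using y by blast
    have "l \<noteq> l'" using xy l l' by blast
    moreover have "X *v f l = l *s f l" "X *v f l' = l' *s f l'" using f l(1) l'(1) by auto
    ultimately have "f l \<bullet> f l' = 0" by (intro eig_orth[OF assms])
    then show "x \<bullet> y = 0" using l l' by simp
  qed
  moreover have "0 \<notin> f ` E" using f by auto
  ultimately have "independent (f ` E)" by (rule pairwise_orthogonal_independent)
  then have "finite (f ` E)" by (rule independent_imp_finite)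
  then show ?thesis using inj finite_imageD E_def by blast
qed

lemma eig_min_props:
  assumes "sym_mat X"
  shows "(\<forall>w. eig_min X * (w \<bullet> w) \<le> qf X w) \<and> (\<exists>u. norm u = 1 \<and> X *v u = eig_min X *s u)"
proof -
  obtain u m where u1: "norm u = 1" and u2: "X *v u = m *s u" and ge: "\<And>w. m * (w \<bullet> w) \<le> qf X w"
    using min_rayleigh[OF assms] by blast
  have "u \<noteq> 0" using u1 by (metis norm_zero zero_neq_one)
  then have mE: "m \<in> eigenvalues X" using u2 unfolding eigenvalues_def by blast
  have le: "m \<le> l" if "l \<in> eigenvalues X" for l
  proof -
    have "\<exists>v. v \<noteq> 0 \<and> X *v v = l *s v" using that unfolding eigenvalues_def mem_Collect_eq .
    then obtain v where v: "v \<noteq> 0 \<and> X *v v = l *s v" ..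
    then have v1: "v \<noteq> 0" and v2: "X *v v = l *s v" by simp_all
    have "qf X v = (l *\<^sub>R v) \<bullet> v" unfolding qf_def v2 by (simp only: scalar_mult_eq_scaleR)
    also have "\<dots> = l * (v \<bullet> v)" by simp
    finally have "m * (v \<bullet> v) \<le> l * (v \<bullet> v)" using ge[of v] by simp
    moreover have "v \<bullet> v > 0" using v1 by simp
    ultimately show ?thesis by simp
  qed
  have "eig_min X = m" unfolding eig_min_def
    by (rule Min_eqI[OF finite_eigenvalues[OF assms] le mE])
  then show ?thesis using u1 u2 ge by auto
qed

lemma neg_mult_vec: "(- Y) *v v = - (Y *v (v::real^'n))" for Y :: "'n::finite rmat"
  unfolding matrix_vector_mult_def by (simp add: vec_eq_iff sum_negf)

lemma sym_neg: "sym_mat Y \<Longrightarrow> sym_mat (- Y)"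
  unfolding sym_mat_def by (simp add: transpose_def vec_eq_iff)

lemma eig_neg_iff: "l \<in> eigenvalues (- Y) \<longleftrightarrow> - l \<in> eigenvalues Y" for Y :: "'n::finite rmat"
proof -
  have iff: "((- Y) *v v = l *s v) \<longleftrightarrow> (Y *v v = (- l) *s v)" for v
  proof -
    have "((- Y) *v v = l *s v) \<longleftrightarrow> (- (Y *v v) = l *\<^sub>R v)"
      by (simp only: neg_mult_vec scalar_mult_eq_scaleR)
    also have "\<dots> \<longleftrightarrow> (Y *v v = (- l) *\<^sub>R v)"
      by (metis minus_minus scaleR_minus_left)
    finally show ?thesis by (simp only: scalar_mult_eq_scaleR)
  qed
  show ?thesis unfolding eigenvalues_def mem_Collect_eq iff ..
qed

lemma eig_min_mem:
  assumes "sym_mat X"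
  shows "eig_min X \<in> eigenvalues X"
proof -
  obtain u where u: "norm u = 1" "X *v u = eig_min X *s u" using eig_min_props[OF assms] by blast
  have "u \<noteq> 0" using u(1) by (metis norm_zero zero_neq_one)
  then show ?thesis using u(2) unfolding eigenvalues_def mem_Collect_eq by blast
qed

lemma eig_min_le:
  assumes "sym_mat X" "l \<in> eigenvalues X"
  shows "eig_min X \<le> l"
  unfolding eig_min_def using finite_eigenvalues[OF assms(1)] assms(2) by (rule Min_le)

lemma eig_max_neg:
  assumes "sym_mat Y"
  shows "eig_max Y = - eig_min (- Y)"
  unfolding eig_max_def
proof (rule Max_eqI)
  have sY: "sym_mat (- Y)" by (rule sym_neg[OF assms])
  show "finite (eigenvalues Y)" by (rule finite_eigenvalues[OF assms])
  show "- eig_min (- Y) \<in> eigenvalues Y"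
    using eig_min_mem[OF sY] eig_neg_iff by blast
  fix l assume "l \<in> eigenvalues Y"
  then have "- l \<in> eigenvalues (- Y)" using eig_neg_iff[of "- l" Y] by simp
  then have "eig_min (- Y) \<le> - l" by (rule eig_min_le[OF sY])
  then show "l \<le> - eig_min (- Y)" by simp
qed

lemma qf_axis: "qf X (axis i 1) = X $ i $ i"
  by (simp add: qf_def inner_axis matrix_vector_mult_basis column_def)

lemma trace_bound:
  fixes X :: "'n::finite rmat"
  assumes "sym_mat X" "norm u = 1" "X *v u = m *s u" "\<And>w. qf X w \<le> K * (w \<bullet> w)"
  shows "trace X \<le> m + (real CARD('n) - 1) * K"
proof -
  have uu: "u \<bullet> u = 1" using assms(2) by (simp add: dot_square_norm)
  have each: "X $ i $ i \<le> K * (1 - (u $ i)^2) + m * (u $ i)^2" for i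
  proof -
    define c where "c = u $ i"
    define w where "w = axis i 1 - c *\<^sub>R u"
    have ax: "axis i 1 = c *\<^sub>R u + w" by (simp add: w_def)
    have uw: "u \<bullet> w = 0" by (simp add: w_def c_def inner_diff_right inner_axis uu)
    have ww: "w \<bullet> w = 1 - c^2"
      by (simp add: w_def c_def inner_diff_right inner_diff_left inner_axis inner_axis' uu inner_commute power2_eq_square)
    have "X $ i $ i = qf X (c *\<^sub>R u + w)" using ax qf_axis by metis
    also have "\<dots> = qf X (c *\<^sub>R u) + 2 * ((X *v (c *\<^sub>R u)) \<bullet> w) + qf X w" by (rule qf_add[OF assms(1)])
    also have "qf X (c *\<^sub>R u) = c^2 * m"
      using assms(3) uu by (simp add: qf_scale qf_def scalar_mult_eq_scaleR matrix_vector_mult_scaleR power2_eq_square)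
    also have "(X *v (c *\<^sub>R u)) \<bullet> w = 0"
      using assms(3) uw by (simp add: matrix_vector_mult_scaleR scalar_mult_eq_scaleR)
    finally have "X $ i $ i = c^2 * m + qf X w" by simp
    also have "\<dots> \<le> c^2 * m + K * (1 - c^2)" using assms(4)[of w] ww by simp
    finally show ?thesis by (simp add: c_def algebra_simps)
  qed
  have "trace X \<le> (\<Sum>i\<in>UNIV. K * (1 - (u $ i)^2) + m * (u $ i)^2)"
    unfolding trace_def by (rule sum_mono) (rule each)
  also have "\<dots> = K * real CARD('n) - K * (\<Sum>i\<in>UNIV. (u $ i)^2) + m * (\<Sum>i\<in>UNIV. (u $ i)^2)"
    by (simp add: sum.distrib sum_distrib_left sum_subtractf algebra_simps)
  also have "(\<Sum>i\<in>UNIV. (u $ i)^2) = 1" using uu by (simp add: inner_vec_def power2_eq_square)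
  finally show ?thesis by (simp add: algebra_simps)
qed


definition Kb :: "'n::finite rmat \<Rightarrow> real" where
  "Kb M = (\<Sum>i\<in>UNIV. \<Sum>j\<in>UNIV. \<bar>M $ i $ j\<bar>)"

lemma Kb_nonneg: "0 \<le> Kb M"
  unfolding Kb_def by (intro sum_nonneg) simp

lemma Kb_cont: "continuous_on S Kb"
  unfolding Kb_def by (intro continuous_intros)

lemma qf_le_Kb: "qf M w \<le> Kb M * (w \<bullet> w)"
proof -
  have "qf M w \<le> norm (M *v w) * norm w" unfolding qf_def by (rule norm_cauchy_schwarz)
  also have "norm (M *v w) \<le> onorm ((*v) M) * norm w"
    by (rule onorm) (simp add: linear_conv_bounded_linear[symmetric])
  also have "onorm ((*v) M) \<le> Kb M" unfolding Kb_def by (rule onorm_le_matrix_component_sum)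
  finally have "qf M w \<le> Kb M * norm w * norm w" by (simp add: mult_right_mono)
  then show ?thesis by (simp add: dot_square_norm power2_eq_square mult.assoc)
qed

lemma loewner_qf: "loewner_le X M \<Longrightarrow> qf X w \<le> qf M w"
  unfolding loewner_le_def qf_def
  by (drule spec[of _ w]) (simp add: matrix_vector_mult_diff_rdistrib inner_diff_right inner_commute)

lemma key_bound:
  fixes X :: "'n::finite rmat"
  assumes "sym_mat X" "loewner_le X M" "norm e = 1" "1 < p"
  shows "trace X + (p - 2) * qf X e \<le> min 1 (p - 1) * eig_min X + (real CARD('n) - 1 + \<bar>p - 2\<bar>) * Kb M"
proof -
  define m where "m = eig_min X"
  define K where "K = Kb M"
  define N where "N = real CARD('n)"
  have N1: "N \<ge> 1" unfolding N_def by simp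
  have K0: "K \<ge> 0" unfolding K_def by (rule Kb_nonneg)
  have ee: "e \<bullet> e = 1" using assms(3) by (simp add: dot_square_norm)
  obtain u where u: "norm u = 1" "X *v u = m *s u" and ge: "\<And>w. m * (w \<bullet> w) \<le> qf X w"
    using eig_min_props[OF assms(1)] unfolding m_def by blast
  have le: "qf X w \<le> K * (w \<bullet> w)" for w
    using loewner_qf[OF assms(2), of w] qf_le_Kb[of M w] unfolding K_def by linarith
  have tr: "trace X \<le> m + (N - 1) * K" unfolding N_def by (rule trace_bound[OF assms(1) u le])
  have q1: "m \<le> qf X e" using ge[of e] ee by simp
  have q2: "qf X e \<le> K" using le[of e] ee by simp
  show ?thesis
  proof (cases "p \<ge> 2")
    case True
    have "(p - 2) * qf X e \<le> (p - 2) * K" using True q2 by (intro mult_left_mono) auto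
    then have "trace X + (p - 2) * qf X e \<le> m + (N - 1 + (p - 2)) * K" using tr by (simp add: algebra_simps)
    then show ?thesis using True unfolding m_def K_def N_def by simp
  next
    case False
    have "(p - 2) * qf X e \<le> (p - 2) * m" using False q1 by (intro mult_left_mono_neg) auto
    then have "trace X + (p - 2) * qf X e \<le> (p - 1) * m + (N - 1) * K" using tr by (simp add: algebra_simps)
    moreover have "(N - 1) * K \<le> (N - 1 + \<bar>p - 2\<bar>) * K" using K0 by (intro mult_right_mono) auto
    ultimately show ?thesis using False assms(4) unfolding m_def K_def N_def by simp
  qed
qed

lemma affine_props:
  fixes c a d :: real
  assumes "c > 0" "a > 0"
  shows "bij (\<lambda>t. c * (a * t + d)) \<and> mono (\<lambda>t. c * (a * t + d)) \<and> inv (\<lambda>t. c * (a * t + d)) 0 = - d / a"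
proof -
  let ?f = "\<lambda>t. c * (a * t + d)"
  have inj: "inj ?f" by (rule injI) (use assms in simp)
  have "?f ((y / c - d) / a) = y" for y using assms by (simp add: field_simps)
  then have "surj ?f" by (rule surjI)
  moreover have "mono ?f" using assms by (intro monoI) (simp add: mult_left_mono)
  moreover have "?f (- d / a) = 0" using assms by (simp add: field_simps)
  then have "inv ?f 0 = - d / a" by (rule inv_f_eq[OF inj])
  ultimately show ?thesis using inj by (simp add: bij_def)
qed


lemma Fp_cont: "continuous_on S (F_p p \<nu>)"
  unfolding F_p_def trace_def matrix_vector_mult_def inner_vec_def
  by (intro continuous_intros)

lemma sym_zero: "sym_mat (0 :: 'n::finite rmat)"
  unfolding sym_mat_def by (simp add: transpose_def vec_eq_iff)

lemma trace_neg: "trace (- Y) = - trace (Y :: 'n::finite rmat)"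
  unfolding trace_def by (simp add: sum_negf)

lemma qf_neg: "qf (- Y) e = - qf (Y :: 'n::finite rmat) e"
  unfolding qf_def by (simp add: neg_mult_vec)

lemma neg_F: "- F_p p \<nu> X = norm \<nu> powr (p - 2) * (trace X + (p - 2) * qf X (\<nu> /\<^sub>R norm \<nu>))"
  unfolding F_p_def qf_def by simp

lemma if_dir:
  fixes \<Omega> :: "(real^'n::finite) set"
  assumes p: "1 < p"
  shows "classM (D_p \<Omega>) (\<lambda>(x, u, \<nu>) X. F_p p \<nu> X)"
  unfolding classM_def
proof (intro conjI allI impI)
  fix \<omega> :: "(real^'n) \<times> real \<times> (real^'n)"
  obtain x u \<nu> where w: "\<omega> = (x, u, \<nu>)" by (cases \<omega>) auto
  show "continuous_on {X. (\<omega>, X) \<in> D_p \<Omega>} ((\<lambda>(x, u, \<nu>) X. F_p p \<nu> X) \<omega>)"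
    unfolding w by (simp add: Fp_cont)
next
  fix \<omega> :: "(real^'n) \<times> real \<times> (real^'n)" and S1 :: "'n rmat set"
  assume sub: "{\<omega>} \<times> S1 \<subseteq> D_p \<Omega>"
  obtain x u \<nu> where w: "\<omega> = (x, u, \<nu>)" by (cases \<omega>) auto
  define a where "a = min 1 (p - 1)"
  define b where "b = real CARD('n) - 1 + \<bar>p - 2\<bar>"
  define c where "c = norm \<nu> powr (p - 2)"
  have a0: "a > 0" using p by (simp add: a_def)
  show "\<exists>g1 :: real \<Rightarrow> 'n rmat \<Rightarrow> real.
           (\<forall>M\<in>S1. bij (\<lambda>t. g1 t M) \<and> mono (\<lambda>t. g1 t M)) \<and>
           continuous_on S1 (\<lambda>M. inv (\<lambda>t. g1 t M) 0) \<and>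
           (\<forall>M\<in>S1. \<forall>X. (\<omega>, X) \<in> D_p \<Omega> \<and> loewner_le X M \<longrightarrow> - (\<lambda>(x, u, \<nu>) X. F_p p \<nu> X) \<omega> X \<le> g1 (eig_min X) M)"
  proof (cases "S1 = {}")
    case True
    show ?thesis by (rule exI[of _ "\<lambda>t M. t"]) (simp add: True bij_id[unfolded id_def] mono_def)
  next
    case False
    then obtain M0 where "M0 \<in> S1" by blast
    then have "\<nu> \<noteq> 0" using sub unfolding w D_p_def by auto
    then have c0: "c > 0" by (simp add: c_def)
    have aff: "bij (\<lambda>t. c * (a * t + b * Kb M)) \<and> mono (\<lambda>t. c * (a * t + b * Kb M)) \<and>
        inv (\<lambda>t. c * (a * t + b * Kb M)) 0 = - (b * Kb M) / a" for M
      by (rule affine_props[OF c0 a0])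
    show ?thesis
    proof (rule exI[of _ "\<lambda>t M. c * (a * t + b * Kb M)"], intro conjI ballI allI impI)
      fix M assume "M \<in> S1"
      show "bij (\<lambda>t. c * (a * t + b * Kb M))" "mono (\<lambda>t. c * (a * t + b * Kb M))" using aff by auto
    next
      have cont: "continuous_on S1 (\<lambda>M. - (b * Kb M) / a)" by (intro continuous_intros Kb_cont) (use a0 in simp)
      have eq: "(\<lambda>M. inv (\<lambda>t. c * (a * t + b * Kb M)) 0) = (\<lambda>M. - (b * Kb M) / a)"
        using aff by (intro ext) blast
      show "continuous_on S1 (\<lambda>M. inv (\<lambda>t. c * (a * t + b * Kb M)) 0)" unfolding eq by (rule cont)
    next
      fix M X assume "M \<in> S1" and h: "(\<omega>, X) \<in> D_p \<Omega> \<and> loewner_le X M"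
      then have nu: "\<nu> \<noteq> 0" and sX: "sym_mat X" and le: "loewner_le X M" unfolding w D_p_def by auto
      have ne: "norm (\<nu> /\<^sub>R norm \<nu>) = 1" using nu by simp
      have "trace X + (p - 2) * qf X (\<nu> /\<^sub>R norm \<nu>) \<le> a * eig_min X + b * Kb M"
        unfolding a_def b_def by (rule key_bound[OF sX le ne p])
      then have "c * (trace X + (p - 2) * qf X (\<nu> /\<^sub>R norm \<nu>)) \<le> c * (a * eig_min X + b * Kb M)"
        using c0 by (intro mult_left_mono) auto
      then show "- (\<lambda>(x, u, \<nu>) X. F_p p \<nu> X) \<omega> X \<le> c * (a * eig_min X + b * Kb M)"
        unfolding w by (simp only: case_prod_conv neg_F c_def)
    qed
  qed
next
  fix \<omega> :: "(real^'n) \<times> real \<times> (real^'n)" and S2 :: "'n rmat set"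
  assume sub: "{\<omega>} \<times> S2 \<subseteq> D_p \<Omega>"
  obtain x u \<nu> where w: "\<omega> = (x, u, \<nu>)" by (cases \<omega>) auto
  define a where "a = min 1 (p - 1)"
  define b where "b = real CARD('n) - 1 + \<bar>p - 2\<bar>"
  define c where "c = norm \<nu> powr (p - 2)"
  have a0: "a > 0" using p by (simp add: a_def)
  show "\<exists>g2 :: real \<Rightarrow> 'n rmat \<Rightarrow> real.
           (\<forall>M\<in>S2. bij (\<lambda>t. g2 t M) \<and> mono (\<lambda>t. g2 t M)) \<and>
           continuous_on S2 (\<lambda>M. inv (\<lambda>t. g2 t M) 0) \<and>
           (\<forall>M\<in>S2. \<forall>Y. (\<omega>, Y) \<in> D_p \<Omega> \<and> loewner_le (- Y) M \<longrightarrow> - (\<lambda>(x, u, \<nu>) X. F_p p \<nu> X) \<omega> Y \<ge> g2 (eig_max Y) M)"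
  proof (cases "S2 = {}")
    case True
    show ?thesis by (rule exI[of _ "\<lambda>t M. t"]) (simp add: True bij_id[unfolded id_def] mono_def)
  next
    case False
    then obtain M0 where "M0 \<in> S2" by blast
    then have "\<nu> \<noteq> 0" using sub unfolding w D_p_def by auto
    then have c0: "c > 0" by (simp add: c_def)
    have aff: "bij (\<lambda>t. c * (a * t + - (b * Kb M))) \<and> mono (\<lambda>t. c * (a * t + - (b * Kb M))) \<and>
        inv (\<lambda>t. c * (a * t + - (b * Kb M))) 0 = - (- (b * Kb M)) / a" for M
      by (rule affine_props[OF c0 a0])
    show ?thesis
    proof (rule exI[of _ "\<lambda>t M. c * (a * t + - (b * Kb M))"], intro conjI ballI allI impI)
      fix M assume "M \<in> S2"
      show "bij (\<lambda>t. c * (a * t + - (b * Kb M)))" "mono (\<lambda>t. c * (a * t + - (b * Kb M)))" using aff by auto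
    next
      have cont: "continuous_on S2 (\<lambda>M. - (- (b * Kb M)) / a)" by (intro continuous_intros Kb_cont) (use a0 in simp)
      have eq: "(\<lambda>M. inv (\<lambda>t. c * (a * t + - (b * Kb M))) 0) = (\<lambda>M. - (- (b * Kb M)) / a)"
        using aff by (intro ext) blast
      show "continuous_on S2 (\<lambda>M. inv (\<lambda>t. c * (a * t + - (b * Kb M))) 0)" unfolding eq by (rule cont)
    next
      fix M Y assume "M \<in> S2" and h: "(\<omega>, Y) \<in> D_p \<Omega> \<and> loewner_le (- Y) M"
      then have nu: "\<nu> \<noteq> 0" and sY: "sym_mat Y" and le: "loewner_le (- Y) M" unfolding w D_p_def by auto
      have sX: "sym_mat (- Y)" by (rule sym_neg[OF sY])
      have ne: "norm (\<nu> /\<^sub>R norm \<nu>) = 1" using nu by simp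
      have "trace (- Y) + (p - 2) * qf (- Y) (\<nu> /\<^sub>R norm \<nu>) \<le> a * eig_min (- Y) + b * Kb M"
        unfolding a_def b_def by (rule key_bound[OF sX le ne p])
      then have "a * eig_max Y + - (b * Kb M) \<le> trace Y + (p - 2) * qf Y (\<nu> /\<^sub>R norm \<nu>)"
        by (simp add: trace_neg qf_neg eig_max_neg[OF sY])
      then have "c * (a * eig_max Y + - (b * Kb M)) \<le> c * (trace Y + (p - 2) * qf Y (\<nu> /\<^sub>R norm \<nu>))"
        using c0 by (intro mult_left_mono) auto
      then show "c * (a * eig_max Y + - (b * Kb M)) \<le> - (\<lambda>(x, u, \<nu>) X. F_p p \<nu> X) \<omega> Y"
        unfolding w by (simp only: case_prod_conv neg_F c_def)
    qed
  qed
qed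


lemma only_if_dir:
  fixes \<Omega> :: "(real^'n::finite) set"
  assumes ne: "\<Omega> \<noteq> {}" and cm: "classM (D_p \<Omega>) (\<lambda>(x, u, \<nu>) X. F_p 1 \<nu> X)"
  shows False
proof -
  obtain x0 where x0: "x0 \<in> \<Omega>" using ne by blast
  obtain i0 :: 'n where True by simp
  define e :: "real^'n" where "e = axis i0 1"
  define \<omega> where "\<omega> = (x0, 0::real, e)"
  have e0: "e \<noteq> 0" by (simp add: e_def)
  have ne1: "norm e = 1" by (simp add: e_def)
  have sub: "{\<omega>} \<times> {0 :: 'n rmat} \<subseteq> D_p \<Omega>"
    using x0 e0 sym_zero by (simp add: \<omega>_def D_p_def)
  obtain g1 :: "real \<Rightarrow> 'n rmat \<Rightarrow> real" where
    bm: "bij (\<lambda>t. g1 t 0) \<and> mono (\<lambda>t. g1 t 0)" and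
    bd: "\<And>X. (\<omega>, X) \<in> D_p \<Omega> \<Longrightarrow> loewner_le X 0 \<Longrightarrow> - (\<lambda>(x, u, \<nu>) X. F_p 1 \<nu> X) \<omega> X \<le> g1 (eig_min X) 0"
    using cm sub unfolding classM_def by (metis singletonI)
  define Xt :: "real \<Rightarrow> 'n rmat" where "Xt t = (\<chi> i j. if i = i0 \<and> j = i0 then t else 0)" for t
  have mv: "Xt t *v v = (t * v $ i0) *\<^sub>R e" for t v
    by (simp add: Xt_def e_def matrix_vector_mult_def vec_eq_iff axis_def if_distrib[of "\<lambda>z. z * _"] sum.delta cong: if_cong)
  have symX: "sym_mat (Xt t)" for t
    by (auto simp: sym_mat_def Xt_def transpose_def vec_eq_iff)
  have pos: "0 \<le> g1 t 0" if t: "t \<le> 0" for t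
  proof -
    have D: "(\<omega>, Xt t) \<in> D_p \<Omega>" using x0 e0 symX by (simp add: \<omega>_def D_p_def)
    have "(0 - Xt t) *v v = - (Xt t *v v)" for v
      using neg_mult_vec[of "Xt t" v] by simp
    then have L: "loewner_le (Xt t) 0" unfolding loewner_le_def
    proof (intro allI)
      fix v :: "real^'n"
      have "t * (v $ i0 * v $ i0) \<le> 0" using t by (intro mult_nonpos_nonneg) auto
      then show "0 \<le> v \<bullet> ((0 - Xt t) *v v)"
        by (simp add: neg_mult_vec mv e_def inner_axis mult.assoc)
    qed
    have tr: "trace (Xt t) = t" by (simp add: trace_def Xt_def if_distrib sum.delta cong: if_cong)
    have en: "e /\<^sub>R norm e = e" using ne1 by simp
    have ei: "e $ i0 = 1" by (simp add: e_def)
    have ee: "e \<bullet> e = 1" using ne1 by (simp add: dot_square_norm)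
    have "Xt t *v e = t *\<^sub>R e" using mv[of t e] ei by simp
    then have q: "(Xt t *v (e /\<^sub>R norm e)) \<bullet> (e /\<^sub>R norm e) = t"
      using ee by (simp only: en) simp
    have "F_p 1 e (Xt t) = 0" unfolding F_p_def q tr by simp
    then have F0: "- (\<lambda>(x, u, \<nu>) X. F_p 1 \<nu> X) \<omega> (Xt t) = 0"
      by (simp add: \<omega>_def)
    have ev: "t \<in> eigenvalues (Xt t)"
      unfolding eigenvalues_def mem_Collect_eq
      using e0 by (intro exI[of _ e]) (simp add: mv e_def scalar_mult_eq_scaleR)
    have "eig_min (Xt t) \<le> t" by (rule eig_min_le[OF symX ev])
    then have "g1 (eig_min (Xt t)) 0 \<le> g1 t 0" using bm by (simp add: mono_def)
    moreover have "0 \<le> g1 (eig_min (Xt t)) 0" using bd[OF D L] F0 by simp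
    ultimately show ?thesis by simp
  qed
  obtain t0 where t0: "g1 t0 0 = -1" using bm unfolding bij_def surj_def by metis
  show False
  proof (cases "t0 \<le> 0")
    case True then show False using pos[OF True] t0 by simp
  next
    case False
    then have "g1 0 0 \<le> g1 t0 0" using bm by (simp add: mono_def)
    then show False using pos[of 0] t0 by simp
  qed
qed

theorem proposition1:
  fixes \<Omega> :: "(real^'n::finite) set" and p :: real
  assumes "open \<Omega>" and "\<Omega> \<noteq> {}" and "1 \<le> p"
  shows "classM (D_p \<Omega>) (\<lambda>(x, u, \<nu>) X. F_p p \<nu> X) \<longleftrightarrow> 1 < p"
proof
  assume cm: "classM (D_p \<Omega>) (\<lambda>(x, u, \<nu>) X. F_p p \<nu> X)"
  show "1 < p"
  proof (rule ccontr)
    assume "\<not> 1 < p"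
    then have "p = 1" using assms(3) by simp
    then show False using only_if_dir[OF assms(2)] cm by simp
  qed
next
  assume "1 < p"
  then show "classM (D_p \<Omega>) (\<lambda>(x, u, \<nu>) X. F_p p \<nu> X)" by (rule if_dir)
qed

end
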